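(* For $i=1,\dots,M$, let $\mathcal Q_i$ be a symmetric positive semidefinite matrix and $C_i$ a matrix with full row rank (as defined in the context), let $Z_i$ be a matrix whose columns form an orthonormal basis of the null space of $C_i$, and assume $Z_i^\top\mathcal Q_iZ_i$ is positive definite and $\beta\in(0,1)$. For $\rho>0$ define \[ \Theta_i(\rho)=\Big\|\big(Z_i^\top(\tfrac1\rho\mathcal Q_i+I)Z_i\big)^{-1}-\tfrac12 I\Big\|_2 . \] Then the penalty parameters that optimize the worst-case convergence rate of Algorithm SE, i.e. that minimize $\|\tilde{\mathcal M}\|_2=\max_i\Theta_i(\rho_i)$ over $\rho_1,\dots,\rho_M>0$, are \[ \rho_i^\star=\sqrt{\operatorname{eig}_{\min}(Z_i^\top\mathcal Q_iZ_i)\,\operatorname{eig}_{\max}(Z_i^\top\mathcal Q_iZ_i)},\qquad i=1,\dots,M, \] and this choice does not depend on $\beta$.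
   Context: Setting: an MPC problem with dynamics $x^{k+1}=Ax^k+Bu^k$, horizon $N$, partitioned into subsystems $i=1,\dots,M$, is written as the stacked problem: minimize $\sum_i(\tfrac12y_i^\top\mathcal Q_iy_i+q_i^\top y_i+K_i)$ s.t. $C_iy_i=c_i$ (subsystem dynamics), $y_i\in\mathcal Y_i$ (convex constraint sets), $Dy=d$ (coupling), where $y_i=[y_i^1;\dots;y_i^N]$, $y_i^k=[u_i^k;w_i^k;x_i^{k+1}]$, $\mathcal Q_i=I_N\otimes\mathrm{diag}(R_i,0,Q_i)$, and $C_iy_i=c_i$ is the linear system $x_i^{k+1}=A_{ii}x_i^k+B_{ii}u_i^k+W_iw_i^k$, $k=1,\dots,N$ (initial state given). Algorithm SE is the ADMM scheme with subsystem penalty parameters $\rho_i>0$ and balancing parameter $\beta\in(0,1]$: (1) $y_i\leftarrow\arg\min_{C_iy_i=c_i}\tfrac12y_i^\top\mathcal Q_iy_i+q_i^\top y_i+\tfrac{\rho_i}2[\beta\|y_i-\zeta_i-\lambda_{\zeta_i}\|^2+(1-\beta)\|y_i-\epsilon_i-\lambda_{\epsilon_i}\|^2]$; (2) $\zeta_i\leftarrow\Pi_{\mathcal Y_i}(y_i-\lambda_{\zeta_i})$; (3) $\epsilon\leftarrow$ the projection of $y-\lambda_\epsilon$ onto $\{D\epsilon=d\}$ in the norm weighted by $(1-\beta)\mathrm{diag}(\rho_iI)$; (4) $\lambda_\zeta\leftarrow\lambda_\zeta-(y-\zeta)$, $\lambda_\epsilon\leftarrow\lambda_\epsilon-(y-\epsilon)$.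 Its worst-case convergence rate bound is governed by $\|\tilde{\mathcal M}\|_2$, where $\tilde{\mathcal M}=\mathrm{diag}_i\big(Z_i^\top\mathcal M_iZ_i-\tfrac12I\big)$ and $\mathcal M_i=Z_i\big(Z_i^\top(\tfrac1{\rho_i}\mathcal Q_i+I)Z_i\big)^{-1}Z_i^\top$; "optimal" means minimizing this quantity. $\operatorname{eig}_{\min},\operatorname{eig}_{\max}$ denote smallest and largest eigenvalues; $\|\cdot\|_2$ is the spectral norm. *)

theory Defs
  imports "Jordan_Normal_Form.DL_Rank" "Jordan_Normal_Form.Char_Poly" "Jordan_Normal_Form.Matrix_Kernel"
begin

definition vnorm :: "real vec \<Rightarrow> real" where
  "vnorm v = sqrt (v \<bullet> v)"

definition spec_norm :: "real mat \<Rightarrow> real" where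
  "spec_norm A = Sup {vnorm (A *\<^sub>v v) | v. v \<in> carrier_vec (dim_col A) \<and> vnorm v \<le> 1}"

definition inv_mat :: "real mat \<Rightarrow> real mat" where
  "inv_mat A = (SOME B. inverts_mat A B \<and> inverts_mat B A)"

definition sym_psd :: "real mat \<Rightarrow> bool" where
  "sym_psd A \<longleftrightarrow> square_mat A \<and> A\<^sup>T = A \<and>
     (\<forall>v \<in> carrier_vec (dim_row A). v \<bullet> (A *\<^sub>v v) \<ge> 0)"

definition sym_pd :: "real mat \<Rightarrow> bool" where
  "sym_pd A \<longleftrightarrow> square_mat A \<and> A\<^sup>T = A \<and>
     (\<forall>v \<in> carrier_vec (dim_row A). v \<noteq> 0\<^sub>v (dim_row A) \<longrightarrow> v \<bullet> (A *\<^sub>v v) > 0)"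

definition full_row_rank :: "real mat \<Rightarrow> bool" where
  "full_row_rank C \<longleftrightarrow> vec_space.rank (dim_row C) C = dim_row C"

definition orthonormal_null_basis :: "real mat \<Rightarrow> real mat \<Rightarrow> bool" where
  "orthonormal_null_basis Z C \<longleftrightarrow> dim_row Z = dim_col C \<and>
     Z\<^sup>T * Z = 1\<^sub>m (dim_col Z) \<and>
     {Z *\<^sub>v w | w. w \<in> carrier_vec (dim_col Z)} = mat_kernel C"

definition eig_min :: "real mat \<Rightarrow> real" where
  "eig_min A = Min {k. eigenvalue A k}"

definition eig_max :: "real mat \<Rightarrow> real" where
  "eig_max A = Max {k. eigenvalue A k}"

definition Theta :: "real mat \<Rightarrow> real mat \<Rightarrow> real \<Rightarrow> real" where
  "Theta Q Z \<rho> = spec_norm (inv_mat (Z\<^sup>T * ((1 / \<rho>) \<cdot>\<^sub>m Q + 1\<^sub>m (dim_row Q)) * Z)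
                      - (1/2) \<cdot>\<^sub>m 1\<^sub>m (dim_col Z))"

end

theory Submission
  imports Defs
begin


lemma sym_real_eigenvalue:
  fixes H :: "real mat"
  assumes H: "H \<in> carrier_mat n n" and n: "n > 0" and sym: "H\<^sup>T = H"
  shows "\<exists>e v. v \<in> carrier_vec n \<and> v \<noteq> 0\<^sub>v n \<and> H *\<^sub>v v = e \<cdot>\<^sub>v v"
proof -
  define Hc where "Hc = map_mat complex_of_real H"
  have Hc: "Hc \<in> carrier_mat n n" using H by (simp add: Hc_def)
  obtain as where cp: "char_poly Hc = (\<Prod> a \<leftarrow> as. [:- a, 1:])" and len: "length as = n"
    using char_poly_factorized[OF Hc] by auto
  from len n obtain a where a: "a \<in> set as" by (cases as) auto
  have "poly (char_poly Hc) a = 0" unfolding cp using a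
    by (induct as) (auto simp: poly_prod_list)
  hence "eigenvalue Hc a" using eigenvalue_root_char_poly[OF Hc] by simp
  then obtain z where z: "z \<in> carrier_vec n" "z \<noteq> 0\<^sub>v n" and ev: "Hc *\<^sub>v z = a \<cdot>\<^sub>v z"
    unfolding eigenvalue_def eigenvector_def using Hc by auto
  define s where "s = (\<Sum>i<n. cnj (z$i) * (\<Sum>j<n. Hc$$(i,j) * z$j))"
  define N where "N = (\<Sum>i<n. cnj (z$i) * z$i)"
  have "s = (\<Sum>i<n. cnj (z$i) * (Hc *\<^sub>v z)$i)"
    unfolding s_def using Hc z by (intro sum.cong) (auto simp: scalar_prod_def row_def atLeast0LessThan)
  also have "\<dots> = (\<Sum>i<n. a * (cnj (z$i) * z$i))"
    using z by (intro sum.cong) (auto simp: ev)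
  also have "\<dots> = a * N" unfolding N_def by (simp add: sum_distrib_left)
  finally have sN: "s = a * N" .
  have "cnj s = (\<Sum>i<n. (z$i) * (\<Sum>j<n. Hc$$(i,j) * cnj (z$j)))"
    unfolding s_def cnj_sum complex_cnj_mult complex_cnj_cnj
    using H by (intro sum.cong refl arg_cong2[where f="(*)"]) (auto simp: Hc_def)
  also have "\<dots> = (\<Sum>i<n. \<Sum>j<n. z$i * Hc$$(i,j) * cnj (z$j))"
    by (simp add: sum_distrib_left mult.assoc)
  also have "\<dots> = (\<Sum>j<n. \<Sum>i<n. z$i * Hc$$(i,j) * cnj (z$j))"
    by (rule sum.swap)
  also have "\<dots> = s" unfolding s_def sum_distrib_left
  proof (intro sum.cong refl)
    fix j i assume "j \<in> {..<n}" "i \<in> {..<n}"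
    hence "Hc$$(i,j) = Hc$$(j,i)" using H arg_cong[OF sym, of "\<lambda>M. M$$(j,i)"] unfolding Hc_def
      by auto
    thus "z$i * Hc$$(i,j) * cnj (z$j) = cnj (z$j) * (Hc$$(j,i) * z$i)" by simp
  qed
  finally have cs: "cnj s = s" .
  have Nreal: "N = of_real (\<Sum>i<n. (cmod (z$i))^2)"
    unfolding N_def of_real_sum complex_norm_square by (simp add: mult.commute)
  have "(\<Sum>i<n. (cmod (z$i))^2) > 0"
  proof -
    have "\<exists>i<n. z$i \<noteq> 0"
    proof (rule ccontr)
      assume "\<not> ?thesis"
      hence "z = 0\<^sub>v n" using z by (intro eq_vecI) auto
      thus False using z by simp
    qed
    then obtain i where i: "i < n" "z$i \<noteq> 0" by blast
    have "(cmod (z$i))^2 \<le> (\<Sum>i<n. (cmod (z$i))^2)"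
      by (rule member_le_sum) (use i in auto)
    moreover have "(cmod (z$i))^2 > 0" using i by simp
    ultimately show ?thesis by linarith
  qed
  hence N0: "N \<noteq> 0" unfolding Nreal by (simp only: of_real_eq_0_iff)
  have "cnj a * cnj N = a * N" using cs sN by simp
  moreover have "cnj N = N" unfolding Nreal by simp
  ultimately have "cnj a = a" using N0 by simp
  then have "a = complex_of_real (Re a)" by (auto simp: complex_eq_iff)
  define e where "e = Re a"
  have "poly (char_poly Hc) (of_real e) = 0" using \<open>poly (char_poly Hc) a = 0\<close> \<open>a = _\<close> e_def by simp
  moreover have "char_poly Hc = map_poly of_real (char_poly H)"
    unfolding Hc_def by (rule of_real_hom.char_poly_hom[OF H])
  ultimately have "poly (char_poly H) e = 0" by simp
  hence "eigenvalue H e" using eigenvalue_root_char_poly[OF H] by simp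
  thus ?thesis unfolding eigenvalue_def eigenvector_def using H by auto
qed


definition househ :: "nat \<Rightarrow> real vec \<Rightarrow> real mat" where
  "househ n w = mat n n (\<lambda>(i,j). (if i = j then 1 else 0) - (2 / (w \<bullet> w)) * w$i * w$j)"

lemma househ_carrier[simp]: "househ n w \<in> carrier_mat n n"
  by (simp add: househ_def)

lemma househ_dim[simp]: "dim_row (househ n w) = n" "dim_col (househ n w) = n"
  by (simp_all add: househ_def)

lemma househ_sym: "(househ n w)\<^sup>T = househ n w"
  by (rule eq_matI) (auto simp: househ_def)

lemma househ_mult:
  assumes w: "w \<in> carrier_vec n" and x: "x \<in> carrier_vec n"
  shows "househ n w *\<^sub>v x = x - ((2 / (w \<bullet> w)) * (w \<bullet> x)) \<cdot>\<^sub>v w"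
proof (rule eq_vecI)
  fix i assume "i < dim_vec (x - ((2 / (w \<bullet> w)) * (w \<bullet> x)) \<cdot>\<^sub>v w)"
  hence i: "i < n" using x w by simp
  let ?a = "2 / (w \<bullet> w)"
  have "(househ n w *\<^sub>v x) $ i = (\<Sum>j\<in>{0..<n}. ((if i = j then 1 else 0) - ?a * w$i * w$j) * x$j)"
    using i x w unfolding househ_def by (simp add: scalar_prod_def row_def)
  also have "\<dots> = (\<Sum>j\<in>{0..<n}. (if i = j then x$j else 0)) - ?a * w$i * (\<Sum>j\<in>{0..<n}. w$j * x$j)"
  proof -
    have "(\<Sum>j\<in>{0..<n}. ((if i = j then 1 else 0) - ?a * w$i * w$j) * x$j)
      = (\<Sum>j\<in>{0..<n}. (if i = j then x$j else 0) - ?a * w$i * (w$j * x$j))"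
      by (intro sum.cong refl) (auto simp: algebra_simps)
    also have "\<dots> = (\<Sum>j\<in>{0..<n}. (if i = j then x$j else 0)) - ?a * w$i * (\<Sum>j\<in>{0..<n}. w$j * x$j)"
      by (simp add: sum_subtractf sum_distrib_left)
    finally show ?thesis .
  qed
  also have "\<dots> = x$i - ?a * w$i * (w \<bullet> x)"
    using i w x by (simp add: scalar_prod_def)
  also have "\<dots> = (x - ((2 / (w \<bullet> w)) * (w \<bullet> x)) \<cdot>\<^sub>v w) $ i" using i w x by simp
  finally show "(househ n w *\<^sub>v x) $ i = (x - ((2 / (w \<bullet> w)) * (w \<bullet> x)) \<cdot>\<^sub>v w) $ i" .
qed (use w x in simp)

lemma aa_ww: "(a::real) = 2 / (w \<bullet> w) \<Longrightarrow> a * a * (w \<bullet> w) = 2 * a"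
  by (cases "w \<bullet> w = 0") (auto simp: field_simps)

lemma househ_inner:
  assumes w: "w \<in> carrier_vec n" and x: "x \<in> carrier_vec n" and y: "y \<in> carrier_vec n"
  shows "(househ n w *\<^sub>v x) \<bullet> (househ n w *\<^sub>v y) = x \<bullet> y"
proof -
  define a where "a = 2 / (w \<bullet> w)"
  have e: "a * a * (w \<bullet> w) = 2 * a" by (rule aa_ww) (simp add: a_def)
  have "(x - (a * (w \<bullet> x)) \<cdot>\<^sub>v w) \<bullet> (y - (a * (w \<bullet> y)) \<cdot>\<^sub>v w)
     = x \<bullet> y - a * (w \<bullet> y) * (x \<bullet> w) - a * (w \<bullet> x) * (w \<bullet> y) + a * (w \<bullet> x) * (a * (w \<bullet> y)) * (w \<bullet> w)"
    using w x y by (simp add: scalar_prod_minus_distrib minus_scalar_prod_distrib algebra_simps)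
  also have "\<dots> = x \<bullet> y - 2 * a * (w \<bullet> x) * (w \<bullet> y) + (a * a * (w \<bullet> w)) * (w \<bullet> x) * (w \<bullet> y)"
    using comm_scalar_prod[OF x w] by (simp add: algebra_simps)
  also have "\<dots> = x \<bullet> y" unfolding e by simp
  finally show ?thesis using househ_mult[OF w x] househ_mult[OF w y] a_def by simp
qed

lemma househ_invol:
  assumes w: "w \<in> carrier_vec n" and x: "x \<in> carrier_vec n"
  shows "househ n w *\<^sub>v (househ n w *\<^sub>v x) = x"
proof -
  define a where "a = 2 / (w \<bullet> w)"
  have e: "a * a * (w \<bullet> w) = 2 * a" by (rule aa_ww) (simp add: a_def)
  have y: "x - (a * (w \<bullet> x)) \<cdot>\<^sub>v w \<in> carrier_vec n" using w x by simp
  have "househ n w *\<^sub>v (househ n w *\<^sub>v x) =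
     (x - (a * (w \<bullet> x)) \<cdot>\<^sub>v w) - (a * (w \<bullet> (x - (a * (w \<bullet> x)) \<cdot>\<^sub>v w))) \<cdot>\<^sub>v w"
    using househ_mult[OF w x] househ_mult[OF w y] a_def by simp
  also have "\<dots> = x"
  proof (rule eq_vecI)
    fix i assume "i < dim_vec x"
    hence i: "i < n" using x by simp
    have "w \<bullet> (x - (a * (w \<bullet> x)) \<cdot>\<^sub>v w) = w \<bullet> x - a * (w \<bullet> x) * (w \<bullet> w)"
      using w x by (simp add: scalar_prod_minus_distrib)
    hence "a * (w \<bullet> (x - (a * (w \<bullet> x)) \<cdot>\<^sub>v w)) = a * (w \<bullet> x) - (a * a * (w \<bullet> w)) * (w \<bullet> x)"
      by (simp only: right_diff_distrib) (simp add: ac_simps)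
    also have "\<dots> = - a * (w \<bullet> x)" unfolding e by simp
    finally have "a * (w \<bullet> (x - (a * (w \<bullet> x)) \<cdot>\<^sub>v w)) = - a * (w \<bullet> x)" .
    thus "((x - (a * (w \<bullet> x)) \<cdot>\<^sub>v w) - (a * (w \<bullet> (x - (a * (w \<bullet> x)) \<cdot>\<^sub>v w))) \<cdot>\<^sub>v w) $ i = x $ i"
      using i w x by (simp add: algebra_simps)
  qed (use w x in simp)
  finally show ?thesis .
qed

lemma rvec_sq_nonneg: "(v::real vec) \<bullet> v \<ge> 0"
  unfolding scalar_prod_def by (intro sum_nonneg) simp

lemma rvec_sq_zero: assumes v: "(v::real vec) \<in> carrier_vec n" and z: "v \<bullet> v = 0"
  shows "v = 0\<^sub>v n"
proof (rule eq_vecI)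
  fix i assume "i < dim_vec (0\<^sub>v n)"
  hence i: "i < n" by simp
  have "\<forall>j\<in>{0..<dim_vec v}. v$j * v$j = 0"
    using z unfolding scalar_prod_def by (subst sum_nonneg_eq_0_iff[symmetric]) auto
  thus "v $ i = (0\<^sub>v n) $ i" using i v by auto
qed (use v in simp)

lemma househ_e0:
  assumes v: "v \<in> carrier_vec n" and n: "n > 0" and vv: "v \<bullet> v = 1"
  shows "househ n (v - unit_vec n 0) *\<^sub>v unit_vec n 0 = v"
proof -
  define w where "w = v - unit_vec n 0"
  have w: "w \<in> carrier_vec n" using v by (simp add: w_def)
  have ww: "w \<bullet> w = 2 - 2 * v$0"
    using v n vv unfolding w_def
    by (simp add: scalar_prod_minus_distrib minus_scalar_prod_distrib comm_scalar_prod[of _ n])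
  have we: "w \<bullet> unit_vec n 0 = v$0 - 1" using v n unfolding w_def by simp
  have hm: "househ n w *\<^sub>v unit_vec n 0 = unit_vec n 0 - ((2 / (w \<bullet> w)) * (w \<bullet> unit_vec n 0)) \<cdot>\<^sub>v w"
    using househ_mult[OF w, of "unit_vec n 0"] by simp
  show ?thesis
  proof (cases "v$0 = 1")
    case True
    hence "w \<bullet> w = 0" using ww by simp
    hence w0: "w = 0\<^sub>v n" by (rule rvec_sq_zero[OF w])
    have "v = unit_vec n 0"
    proof (rule eq_vecI)
      fix i assume "i < dim_vec (unit_vec n 0)"
      hence "i < n" by simp
      thus "v $ i = unit_vec n 0 $ i" using arg_cong[OF w0, of "\<lambda>x. x $ i"] v unfolding w_def by simp
    qed (use v in simp)
    then show ?thesis unfolding w_def[symmetric] hm using \<open>w \<bullet> w = 0\<close> w0 by (intro eq_vecI) auto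
  next
    case False
    have c: "(2 / (w \<bullet> w)) * (w \<bullet> unit_vec n 0) = -1" using False ww we by (simp add: field_simps)
    show ?thesis unfolding w_def[symmetric] hm c
    proof (rule eq_vecI)
      fix i assume "i < dim_vec v"
      thus "(unit_vec n 0 - (- 1) \<cdot>\<^sub>v w) $ i = v $ i" using v unfolding w_def by simp
    qed (use v w in simp)
  qed
qed



lemma spectral:
  fixes H :: "real mat"
  shows "H \<in> carrier_mat n n \<Longrightarrow> H\<^sup>T = H \<Longrightarrow> \<exists>vs. length vs = n \<and>
    (\<forall>i<n. vs!i \<in> carrier_vec n \<and> (\<exists>e. H *\<^sub>v vs!i = e \<cdot>\<^sub>v vs!i)) \<and>
    (\<forall>i<n. \<forall>j<n. vs!i \<bullet> vs!j = (if i = j then 1 else 0))"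
proof (induct n arbitrary: H)
  case 0 then show ?case by auto
next
  case (Suc m H)
  let ?n = "Suc m"
  have H: "H \<in> carrier_mat ?n ?n" and sym: "H\<^sup>T = H" by fact+
  obtain e v0 where v0: "v0 \<in> carrier_vec ?n" "v0 \<noteq> 0\<^sub>v ?n" and ev0: "H *\<^sub>v v0 = e \<cdot>\<^sub>v v0"
    using sym_real_eigenvalue[OF H _ sym] by auto
  define p where "p = v0 \<bullet> v0"
  have "p \<noteq> 0" using rvec_sq_zero[OF v0(1)] v0(2) p_def by auto
  hence pos: "p > 0" using rvec_sq_nonneg[of v0] p_def by linarith
  define v where "v = (1 / sqrt p) \<cdot>\<^sub>v v0"
  have v: "v \<in> carrier_vec ?n" using v0 by (simp add: v_def)
  have vv: "v \<bullet> v = 1" using v0 pos unfolding v_def p_def[symmetric]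
    by (simp add: p_def[symmetric])
  have ev: "H *\<^sub>v v = e \<cdot>\<^sub>v v"
    unfolding v_def mult_mat_vec[OF H v0(1)] ev0 by (intro eq_vecI) auto
  define w where "w = v - unit_vec ?n 0"
  define W where "W = househ ?n w"
  have w: "w \<in> carrier_vec ?n" using v by (simp add: w_def)
  have W: "W \<in> carrier_mat ?n ?n" by (simp add: W_def)
  have We0: "W *\<^sub>v unit_vec ?n 0 = v" unfolding W_def w_def using househ_e0[OF v _ vv] by simp
  have Wv: "W *\<^sub>v v = unit_vec ?n 0"
    using househ_invol[OF w, of "unit_vec ?n 0"] We0 unfolding W_def by simp
  have WW: "\<And>x. x \<in> carrier_vec ?n \<Longrightarrow> W *\<^sub>v (W *\<^sub>v x) = x"
    unfolding W_def using househ_invol[OF w] by simp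
  have Winner: "\<And>x y. x \<in> carrier_vec ?n \<Longrightarrow> y \<in> carrier_vec ?n \<Longrightarrow> (W *\<^sub>v x) \<bullet> (W *\<^sub>v y) = x \<bullet> y"
    unfolding W_def using househ_inner[OF w] by simp
  define Ht where "Ht = W * H * W"
  have Ht: "Ht \<in> carrier_mat ?n ?n" using W H by (simp add: Ht_def)
  have Htx: "Ht *\<^sub>v x = W *\<^sub>v (H *\<^sub>v (W *\<^sub>v x))" if x: "x \<in> carrier_vec ?n" for x
  proof -
    have WH: "W * H \<in> carrier_mat ?n ?n" using W H by simp
    have "Ht *\<^sub>v x = (W * H) *\<^sub>v (W *\<^sub>v x)" unfolding Ht_def
      by (rule assoc_mult_mat_vec[OF WH W x])
    also have "\<dots> = W *\<^sub>v (H *\<^sub>v (W *\<^sub>v x))"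
      by (rule assoc_mult_mat_vec[OF W H]) (use W x in simp)
    finally show ?thesis .
  qed
  have Htsym: "Ht\<^sup>T = Ht"
  proof -
    have WT: "W\<^sup>T = W" unfolding W_def by (rule househ_sym)
    have "Ht\<^sup>T = W\<^sup>T * (W * H)\<^sup>T" unfolding Ht_def
      by (rule transpose_mult[of _ ?n ?n]) (use W H in auto)
    also have "(W * H)\<^sup>T = H\<^sup>T * W\<^sup>T" by (rule transpose_mult[of _ ?n ?n]) (use W H in auto)
    finally show ?thesis unfolding WT sym Ht_def using W H by (simp add: assoc_mult_mat[of _ ?n ?n])
  qed
  have e0: "unit_vec ?n 0 \<in> carrier_vec ?n" by simp
  have Hte0: "Ht *\<^sub>v unit_vec ?n 0 = e \<cdot>\<^sub>v unit_vec ?n 0"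
    unfolding Htx[OF e0] We0 ev mult_mat_vec[OF W v] Wv ..
  have col0: "\<And>i. i < ?n \<Longrightarrow> Ht$$(i,0) = (if i = 0 then e else 0)"
  proof -
    fix i assume i: "i < ?n"
    have "Ht$$(i,0) = (Ht *\<^sub>v unit_vec ?n 0) $ i" using Ht i by simp
    thus "Ht$$(i,0) = (if i = 0 then e else 0)" unfolding Hte0 using i by simp
  qed
  have Htsymi: "\<And>i j. i < ?n \<Longrightarrow> j < ?n \<Longrightarrow> Ht$$(i,j) = Ht$$(j,i)"
    using arg_cong[OF Htsym, of "\<lambda>M. M$$(_,_)"] Ht by (metis carrier_matD index_transpose_mat(1))
  have row0: "\<And>j. j < ?n \<Longrightarrow> Ht$$(0,j) = (if j = 0 then e else 0)"
    using col0 Htsymi by simp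
  define H1 where "H1 = mat m m (\<lambda>(i,j). Ht$$(Suc i, Suc j))"
  have H1: "H1 \<in> carrier_mat m m" by (simp add: H1_def)
  have H1sym: "H1\<^sup>T = H1" unfolding H1_def using Htsymi by (intro eq_matI) auto
  from Suc.hyps[OF H1 H1sym] obtain ys where ys: "length ys = m"
    "\<And>i. i < m \<Longrightarrow> ys!i \<in> carrier_vec m \<and> (\<exists>e. H1 *\<^sub>v ys!i = e \<cdot>\<^sub>v ys!i)"
    "\<And>i j. i < m \<Longrightarrow> j < m \<Longrightarrow> ys!i \<bullet> ys!j = (if i = j then 1 else 0)" by blast
  have lift: "Ht *\<^sub>v vCons 0 y = vCons 0 (H1 *\<^sub>v y)" if y: "y \<in> carrier_vec m" for y
  proof (rule eq_vecI)
    fix i assume "i < dim_vec (vCons 0 (H1 *\<^sub>v y))"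
    hence i: "i < ?n" using H1 by simp
    have "(Ht *\<^sub>v vCons 0 y) $ i = (\<Sum>j<?n. Ht$$(i,j) * vCons 0 y $ j)"
      using Ht i y by (simp add: scalar_prod_def atLeast0LessThan)
    also have "\<dots> = (\<Sum>j<m. Ht$$(i,Suc j) * y $ j)"
      by (subst sum.lessThan_Suc_shift) simp
    also have "\<dots> = vCons 0 (H1 *\<^sub>v y) $ i"
    proof (cases i)
      case 0 thus ?thesis using row0 by simp
    next
      case (Suc k)
      hence k: "k < m" using i by simp
      show ?thesis using Suc k y H1 by (simp add: scalar_prod_def atLeast0LessThan H1_def)
    qed
    finally show "(Ht *\<^sub>v vCons 0 y) $ i = vCons 0 (H1 *\<^sub>v y) $ i" .
  qed (use Ht H1 in simp)
  define vs where "vs = v # map (\<lambda>y. W *\<^sub>v vCons 0 y) ys"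
  have len: "length vs = ?n" using ys by (simp add: vs_def)
  have car: "vs!i \<in> carrier_vec ?n" if "i < ?n" for i
    using that ys W v by (cases i) (auto simp: vs_def)
  have eig: "\<exists>e. H *\<^sub>v vs!i = e \<cdot>\<^sub>v vs!i" if i: "i < ?n" for i
  proof (cases i)
    case 0 thus ?thesis using ev by (auto simp: vs_def)
  next
    case (Suc k)
    hence k: "k < m" using i by simp
    obtain mu where mu: "H1 *\<^sub>v ys!k = mu \<cdot>\<^sub>v ys!k" using ys(2)[OF k] by blast
    have y: "ys!k \<in> carrier_vec m" using ys(2)[OF k] by blast
    let ?y = "vCons 0 (ys!k)"
    have y': "?y \<in> carrier_vec ?n" using y by simp
    have "Ht *\<^sub>v ?y = mu \<cdot>\<^sub>v ?y" unfolding lift[OF y] mu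
      by (rule eq_vecI) (auto simp: less_Suc_eq_0_disj)
    hence "W *\<^sub>v (W *\<^sub>v (H *\<^sub>v (W *\<^sub>v ?y))) = W *\<^sub>v (mu \<cdot>\<^sub>v ?y)" unfolding Htx[OF y'] by simp
    hence "H *\<^sub>v (W *\<^sub>v ?y) = mu \<cdot>\<^sub>v (W *\<^sub>v ?y)"
      using WW[of "H *\<^sub>v (W *\<^sub>v ?y)"] H W y' mult_mat_vec[OF W y'] by simp
    thus ?thesis using Suc k ys(1) by (auto simp: vs_def)
  qed
  define g where "g = (\<lambda>i. if i = 0 then unit_vec ?n 0 else vCons 0 (ys!(i - 1)))"
  have gc: "g i \<in> carrier_vec ?n" if "i < ?n" for i
    using ys(2)[of "i - 1"] that by (auto simp: g_def)
  have vsg: "vs!i = W *\<^sub>v g i" if "i < ?n" for i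
    using We0 that ys(1) by (cases i) (auto simp: vs_def g_def)
  have gg: "g i \<bullet> g j = (if i = j then 1 else 0)" if i: "i < ?n" and j: "j < ?n" for i j
  proof (cases i)
    case 0
    then show ?thesis
    proof (cases j)
      case 0 thus ?thesis using \<open>i = 0\<close> by (simp add: g_def)
    next
      case (Suc l)
      thus ?thesis using \<open>i = 0\<close> gc[OF j] by (simp add: g_def)
    qed
  next
    case (Suc k)
    then show ?thesis
    proof (cases j)
      case 0
      have "g i \<bullet> g j = g j \<bullet> g i" by (rule comm_scalar_prod[OF gc[OF i] gc[OF j]])
      thus ?thesis using 0 Suc gc[OF i] by (simp add: g_def)
    next
      case (Suc l)
      thus ?thesis using \<open>i = Suc k\<close> ys(3)[of k l] i j by (simp add: g_def)
    qed
  qed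
  have orth: "vs!i \<bullet> vs!j = (if i = j then 1 else 0)" if i: "i < ?n" and j: "j < ?n" for i j
    unfolding vsg[OF i] vsg[OF j] Winner[OF gc[OF i] gc[OF j]] by (rule gg[OF i j])
  show ?case using len car eig orth by blast
qed



definition dg :: "nat \<Rightarrow> (nat \<Rightarrow> real) \<Rightarrow> real mat" where
  "dg n d = mat n n (\<lambda>(i,j). if i = j then d i else 0)"

lemma dg_carrier[simp]: "dg n d \<in> carrier_mat n n" by (simp add: dg_def)

lemma dg_dim[simp]: "dim_row (dg n d) = n" "dim_col (dg n d) = n" by (simp_all add: dg_def)

lemma dg_mv_carrier[simp]: "dg n d *\<^sub>v y \<in> carrier_vec n" unfolding carrier_vec_def by (simp add: dg_def)

lemma dg_col: "j < n \<Longrightarrow> col (dg n d) j = d j \<cdot>\<^sub>v unit_vec n j"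
  by (rule eq_vecI) (auto simp: dg_def)

lemma dg_mult_vec: "y \<in> carrier_vec n \<Longrightarrow> dg n d *\<^sub>v y = vec n (\<lambda>i. d i * y $ i)"
proof (rule eq_vecI)
  fix i assume y: "y \<in> carrier_vec n" and "i < dim_vec (vec n (\<lambda>i. d i * y $ i))"
  hence i: "i < n" by simp
  have "row (dg n d) i = d i \<cdot>\<^sub>v unit_vec n i" using i by (intro eq_vecI) (auto simp: dg_def)
  thus "(dg n d *\<^sub>v y) $ i = vec n (\<lambda>i. d i * y $ i) $ i" using i y by (simp add: dg_def)
qed (simp add: dg_def)

lemma dg_mult: "dg n d1 * dg n d2 = dg n (\<lambda>i. d1 i * d2 i)"
proof (rule eq_matI)
  fix i j assume "i < dim_row (dg n (\<lambda>i. d1 i * d2 i))" "j < dim_col (dg n (\<lambda>i. d1 i * d2 i))"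
  hence i: "i < n" and j: "j < n" by (auto simp: dg_def)
  have "row (dg n d1) i = d1 i \<cdot>\<^sub>v unit_vec n i" using i by (intro eq_vecI) (auto simp: dg_def)
  thus "(dg n d1 * dg n d2) $$ (i, j) = dg n (\<lambda>i. d1 i * d2 i) $$ (i, j)"
    using i j by (simp add: dg_col dg_def)
qed (auto simp: dg_def)

lemma dg_one: "dg n (\<lambda>i. 1) = 1\<^sub>m n"
  by (rule eq_matI) (auto simp: dg_def)

lemma vnorm_smult: "vnorm (c \<cdot>\<^sub>v x) = \<bar>c\<bar> * vnorm x"
proof -
  have "(c \<cdot>\<^sub>v x) \<bullet> (c \<cdot>\<^sub>v x) = c\<^sup>2 * (x \<bullet> x)" by (simp add: power2_eq_square)
  thus ?thesis unfolding vnorm_def by (simp add: real_sqrt_mult)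
qed

lemma vnorm_nonneg: "vnorm x \<ge> 0" unfolding vnorm_def using rvec_sq_nonneg[of x] by simp

lemma spec_norm_le:
  assumes b: "b \<ge> 0" and bound: "\<And>x. x \<in> carrier_vec (dim_col A) \<Longrightarrow> vnorm (A *\<^sub>v x) \<le> b * vnorm x"
  shows "spec_norm A \<le> b"
  unfolding spec_norm_def
proof (rule cSup_least)
  show "{vnorm (A *\<^sub>v v) |v. v \<in> carrier_vec (dim_col A) \<and> vnorm v \<le> 1} \<noteq> {}"
  proof -
    have "0\<^sub>v (dim_col A) \<in> carrier_vec (dim_col A) \<and> vnorm (0\<^sub>v (dim_col A)) \<le> 1"
      by (simp add: vnorm_def)
    thus ?thesis by blast
  qed
next
  fix y assume "y \<in> {vnorm (A *\<^sub>v v) |v. v \<in> carrier_vec (dim_col A) \<and> vnorm v \<le> 1}"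
  then obtain v where v: "v \<in> carrier_vec (dim_col A)" "vnorm v \<le> 1" and y: "y = vnorm (A *\<^sub>v v)" by auto
  have "y \<le> b * vnorm v" using bound[OF v(1)] y by simp
  also have "\<dots> \<le> b * 1" using v(2) b by (intro mult_left_mono) auto
  finally show "y \<le> b" by simp
qed

lemma spec_norm_ge:
  assumes b: "b \<ge> 0" and bound: "\<And>x. x \<in> carrier_vec (dim_col A) \<Longrightarrow> vnorm (A *\<^sub>v x) \<le> b * vnorm x"
    and x: "x \<in> carrier_vec (dim_col A)" and x0: "x \<noteq> 0\<^sub>v (dim_col A)" and ev: "A *\<^sub>v x = c \<cdot>\<^sub>v x"
  shows "\<bar>c\<bar> \<le> spec_norm A"
proof -
  have "x \<bullet> x \<noteq> 0" using rvec_sq_zero[OF x] x0 by auto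
  hence p: "x \<bullet> x > 0" using rvec_sq_nonneg[of x] by linarith
  hence nx: "vnorm x > 0" by (simp add: vnorm_def)
  define y where "y = (1 / vnorm x) \<cdot>\<^sub>v x"
  have y: "y \<in> carrier_vec (dim_col A)" using x by (simp add: y_def)
  have ny: "vnorm y = 1" using nx by (simp add: y_def vnorm_smult)
  have "A *\<^sub>v y = c \<cdot>\<^sub>v y" unfolding y_def mult_mat_vec[OF carrier_matI[OF refl refl] x] ev
    by (rule eq_vecI) auto
  hence "vnorm (A *\<^sub>v y) = \<bar>c\<bar>" using ny by (simp add: vnorm_smult)
  moreover have "vnorm (A *\<^sub>v y) \<le> spec_norm A" unfolding spec_norm_def
  proof (rule cSup_upper)
    show "vnorm (A *\<^sub>v y) \<in> {vnorm (A *\<^sub>v v) |v. v \<in> carrier_vec (dim_col A) \<and> vnorm v \<le> 1}"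
      using y ny by auto
    show "bdd_above {vnorm (A *\<^sub>v v) |v. v \<in> carrier_vec (dim_col A) \<and> vnorm v \<le> 1}"
    proof (rule bdd_aboveI)
      fix z assume "z \<in> {vnorm (A *\<^sub>v v) |v. v \<in> carrier_vec (dim_col A) \<and> vnorm v \<le> 1}"
      then obtain v where v: "v \<in> carrier_vec (dim_col A)" "vnorm v \<le> 1" and z: "z = vnorm (A *\<^sub>v v)" by auto
      have "z \<le> b * vnorm v" using bound[OF v(1)] z by simp
      also have "\<dots> \<le> b * 1" using v(2) b by (intro mult_left_mono) auto
      finally show "z \<le> b" by simp
    qed
  qed
  ultimately show ?thesis by simp
qed



lemma smult_mat_vec: assumes A: "A \<in> carrier_mat nr nc" and v: "v \<in> carrier_vec nc"
  shows "(k \<cdot>\<^sub>m A) *\<^sub>v v = k \<cdot>\<^sub>v (A *\<^sub>v v)"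
  using A v by (intro eq_vecI) (auto simp: scalar_prod_def sum_distrib_left mult.assoc)

lemma theta_bounds:
  fixes Hm :: "real mat" and vs :: "real vec list" and e :: "nat \<Rightarrow> real" and \<rho> :: real
  assumes Hm: "Hm \<in> carrier_mat n n" and len: "length vs = n"
   and vc: "\<And>i. i<n \<Longrightarrow> vs!i \<in> carrier_vec n" and ev: "\<And>i. i<n \<Longrightarrow> Hm *\<^sub>v vs!i = e i \<cdot>\<^sub>v vs!i"
   and on: "\<And>i j. i<n \<Longrightarrow> j<n \<Longrightarrow> vs!i \<bullet> vs!j = (if i=j then 1 else 0)"
   and epos: "\<And>i. i<n \<Longrightarrow> e i > 0" and rho: "\<rho> > 0"
  defines "A \<equiv> inv_mat ((1/\<rho>) \<cdot>\<^sub>m Hm + 1\<^sub>m n) - (1/2) \<cdot>\<^sub>m 1\<^sub>m n"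
  shows "\<And>b. b \<ge> 0 \<Longrightarrow> (\<And>i. i<n \<Longrightarrow> \<bar>(\<rho> - e i)/(2*(\<rho> + e i))\<bar> \<le> b) \<Longrightarrow> spec_norm A \<le> b"
    and "\<And>l x. x \<in> carrier_vec n \<Longrightarrow> x \<noteq> 0\<^sub>v n \<Longrightarrow> Hm *\<^sub>v x = l \<cdot>\<^sub>v x \<Longrightarrow> l > 0 \<Longrightarrow>
           \<bar>(\<rho> - l)/(2*(\<rho> + l))\<bar> \<le> spec_norm A"
proof -
  define U where "U = mat_of_cols n vs"
  have U: "U \<in> carrier_mat n n" using mat_of_cols_carrier(1)[of n vs] len by (simp add: U_def)
  have UT: "U\<^sup>T \<in> carrier_mat n n" using U by simp
  have colU: "\<And>j. j < n \<Longrightarrow> col U j = vs!j" unfolding U_def using len vc by simp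
  have UTU: "U\<^sup>T * U = 1\<^sub>m n"
    by (rule eq_matI) (use U colU on in auto)
  have UUT: "U * U\<^sup>T = 1\<^sub>m n" by (rule mat_mult_left_right_inverse[OF UT U UTU])
  define K where "K = (1/\<rho>) \<cdot>\<^sub>m Hm + 1\<^sub>m n"
  have K: "K \<in> carrier_mat n n" using Hm by (simp add: K_def)
  define d1 where "d1 = (\<lambda>i. 1 + e i / \<rho>)"
  define d2 where "d2 = (\<lambda>i. \<rho> / (\<rho> + e i))"
  have Kv: "K *\<^sub>v vs!j = d1 j \<cdot>\<^sub>v vs!j" if j: "j < n" for j
  proof -
    have "K *\<^sub>v vs!j = (1/\<rho>) \<cdot>\<^sub>v (Hm *\<^sub>v vs!j) + vs!j" unfolding K_def
      using Hm vc[OF j] by (simp add: add_mult_distrib_mat_vec[of _ n n] smult_mat_vec[OF Hm])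
    thus ?thesis unfolding ev[OF j] d1_def using vc[OF j] by (intro eq_vecI) (auto simp: distrib_right)
  qed
  have KU: "K * U = U * dg n d1"
  proof (rule eq_matI)
    fix i j assume "i < dim_row (U * dg n d1)" "j < dim_col (U * dg n d1)"
    hence i: "i < n" and j: "j < n" using U by (auto simp: dg_def)
    have "(K * U) $$ (i,j) = (K *\<^sub>v vs!j) $ i" using K U i j colU by simp
    also have "\<dots> = d1 j * vs!j $ i" unfolding Kv[OF j] using vc[OF j] i by simp
    also have "\<dots> = d1 j * U $$ (i,j)" using arg_cong[OF colU[OF j], of "\<lambda>v. v $ i"] U i j by simp
    also have "\<dots> = row U i \<bullet> (d1 j \<cdot>\<^sub>v unit_vec n j)" using U i j by simp
    also have "\<dots> = (U * dg n d1) $$ (i,j)" unfolding dg_col[OF j, symmetric] using U i j by (simp add: dg_def)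
    finally show "(K * U) $$ (i,j) = (U * dg n d1) $$ (i,j)" .
  qed (use K U in auto)
  define B0 where "B0 = U * dg n d2 * U\<^sup>T"
  have B0: "B0 \<in> carrier_mat n n" unfolding B0_def
    by (rule mult_carrier_mat[OF mult_carrier_mat[OF U dg_carrier]]) (use U in simp)
  have d12: "dg n d1 * dg n d2 = 1\<^sub>m n"
  proof -
    have "d1 i * d2 i = 1" if i: "i < n" for i
    proof -
      have p: "\<rho> + e i > 0" using epos[OF i] rho by simp
      have "d1 i * d2 i = ((\<rho> + e i) / \<rho>) * (\<rho> / (\<rho> + e i))" unfolding d1_def d2_def
        using rho by (simp add: field_simps)
      also have "\<dots> = 1" using p rho by simp
      finally show ?thesis .
    qed
    hence "dg n (\<lambda>i. d1 i * d2 i) = dg n (\<lambda>i. 1)" unfolding dg_def by (intro eq_matI) auto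
    thus ?thesis unfolding dg_mult dg_one .
  qed
  have KB0: "K * B0 = 1\<^sub>m n"
  proof -
    have D1: "dg n d1 \<in> carrier_mat n n" and D2: "dg n d2 \<in> carrier_mat n n" by simp_all
    have UD2: "U * dg n d2 \<in> carrier_mat n n" using U by simp
    have "K * B0 = (K * (U * dg n d2)) * U\<^sup>T" unfolding B0_def by (rule assoc_mult_mat[OF K UD2 UT, symmetric])
    also have "K * (U * dg n d2) = (K * U) * dg n d2" by (rule assoc_mult_mat[OF K U D2, symmetric])
    also have "\<dots> = U * (dg n d1 * dg n d2)" unfolding KU by (rule assoc_mult_mat[OF U D1 D2])
    also have "\<dots> = U" unfolding d12 using U by simp
    finally show ?thesis using UUT by simp
  qed
  have B0K: "B0 * K = 1\<^sub>m n" by (rule mat_mult_left_right_inverse[OF K B0 KB0])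
  have invK: "inv_mat K = B0"
  proof -
    have ex: "\<exists>B. inverts_mat K B \<and> inverts_mat B K"
      using KB0 B0K K B0 unfolding inverts_mat_def by auto
    define B where "B = inv_mat K"
    have Bp: "inverts_mat K B \<and> inverts_mat B K" unfolding B_def inv_mat_def by (rule someI_ex[OF ex])
    hence KB: "K * B = 1\<^sub>m n" and BK: "B * K = 1\<^sub>m (dim_row B)" using K unfolding inverts_mat_def by auto
    have "dim_col B = n" using arg_cong[OF KB, of dim_col] by simp
    moreover have "dim_row B = n" using arg_cong[OF BK, of dim_col] K by simp
    ultimately have Bc: "B \<in> carrier_mat n n" by auto
    have "B = B * (K * B0)" using Bc KB0 by simp
    also have "\<dots> = (B * K) * B0" using Bc K B0 by (simp add: assoc_mult_mat[of _ n n])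
    also have "\<dots> = B0" using BK Bc B0 by simp
    finally show ?thesis unfolding B_def by simp
  qed
  have Aeq: "A = B0 - (1/2) \<cdot>\<^sub>m 1\<^sub>m n" unfolding A_def K_def[symmetric] invK ..
  have A: "A \<in> carrier_mat n n" unfolding Aeq by (rule minus_carrier_mat) simp
  define d3 where "d3 = (\<lambda>i. d2 i - 1/2)"
  have Ax: "A *\<^sub>v x = U *\<^sub>v (dg n d3 *\<^sub>v (U\<^sup>T *\<^sub>v x))" if x: "x \<in> carrier_vec n" for x
  proof -
    define y where "y = U\<^sup>T *\<^sub>v x"
    have y: "y \<in> carrier_vec n" using UT x by (simp add: y_def)
    have xy: "x = U *\<^sub>v y" unfolding y_def using U UT x UUT
      by (simp add: assoc_mult_mat_vec[symmetric, of U n n "U\<^sup>T" n x])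
    have "A *\<^sub>v x = B0 *\<^sub>v x - (1/2) \<cdot>\<^sub>v x" unfolding Aeq
      using B0 x by (simp add: minus_mult_distrib_mat_vec[of _ n n] smult_mat_vec[of "1\<^sub>m n" n n])
    also have "B0 *\<^sub>v x = U *\<^sub>v (dg n d2 *\<^sub>v y)" unfolding B0_def y_def using U UT x
      by (simp add: assoc_mult_mat_vec[of _ n n _ n])
    also have "(1/2) \<cdot>\<^sub>v x = U *\<^sub>v ((1/2) \<cdot>\<^sub>v y)" unfolding xy mult_mat_vec[OF U y] ..
    also have "U *\<^sub>v (dg n d2 *\<^sub>v y) - U *\<^sub>v ((1/2) \<cdot>\<^sub>v y) = U *\<^sub>v (dg n d2 *\<^sub>v y - (1/2) \<cdot>\<^sub>v y)"
      by (rule mult_minus_distrib_mat_vec[OF U, symmetric]) (use y in simp_all)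
    also have "dg n d2 *\<^sub>v y - (1/2) \<cdot>\<^sub>v y = dg n d3 *\<^sub>v y"
      using y by (intro eq_vecI) (auto simp: dg_mult_vec d3_def left_diff_distrib)
    finally show ?thesis unfolding y_def .
  qed
  have Uiso: "(U *\<^sub>v z) \<bullet> (U *\<^sub>v z) = z \<bullet> z" if z: "z \<in> carrier_vec n" for z
  proof -
    have "(U *\<^sub>v z) \<bullet> (U *\<^sub>v z) = (U\<^sup>T *\<^sub>v (U *\<^sub>v z)) \<bullet> z"
      using transpose_vec_mult_scalar[OF U z, of "U *\<^sub>v z"] U z by simp
    also have "U\<^sup>T *\<^sub>v (U *\<^sub>v z) = z" using U UT z UTU
      by (simp add: assoc_mult_mat_vec[symmetric, of "U\<^sup>T" n n U n z])
    finally show ?thesis .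
  qed
  have UTiso: "(U\<^sup>T *\<^sub>v z) \<bullet> (U\<^sup>T *\<^sub>v z) = z \<bullet> z" if z: "z \<in> carrier_vec n" for z
  proof -
    have "(U\<^sup>T *\<^sub>v z) \<bullet> (U\<^sup>T *\<^sub>v z) = z \<bullet> (U *\<^sub>v (U\<^sup>T *\<^sub>v z))"
      using transpose_vec_mult_scalar[OF U, of "U\<^sup>T *\<^sub>v z" z] U z by simp
    also have "U *\<^sub>v (U\<^sup>T *\<^sub>v z) = z" using U UT z UUT
      by (simp add: assoc_mult_mat_vec[symmetric, of U n n "U\<^sup>T" n z])
    finally show ?thesis .
  qed
  have bound: "vnorm (A *\<^sub>v x) \<le> b * vnorm x"
    if b: "b \<ge> 0" and bi: "\<And>i. i<n \<Longrightarrow> \<bar>(\<rho> - e i)/(2*(\<rho> + e i))\<bar> \<le> b" and x: "x \<in> carrier_vec n" for b x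
  proof -
    define y where "y = U\<^sup>T *\<^sub>v x"
    have y: "y \<in> carrier_vec n" using UT x by (simp add: y_def)
    have d3b: "\<bar>d3 i\<bar> \<le> b" if i: "i < n" for i
    proof -
      have "d3 i = (\<rho> - e i)/(2*(\<rho> + e i))" unfolding d3_def d2_def using epos[OF i] rho
        by (simp add: field_simps)
      thus ?thesis using bi[OF i] by simp
    qed
    have "(A *\<^sub>v x) \<bullet> (A *\<^sub>v x) = (dg n d3 *\<^sub>v y) \<bullet> (dg n d3 *\<^sub>v y)"
      unfolding Ax[OF x] y_def[symmetric] by (rule Uiso) (use y in simp)
    also have "\<dots> = (\<Sum>i<n. (d3 i)\<^sup>2 * (y$i)\<^sup>2)" using y
      by (simp add: dg_mult_vec scalar_prod_def atLeast0LessThan power2_eq_square mult_ac)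
    also have "\<dots> \<le> (\<Sum>i<n. b\<^sup>2 * (y$i)\<^sup>2)"
    proof (intro sum_mono mult_right_mono)
      fix i assume "i \<in> {..<n}"
      hence "\<bar>d3 i\<bar> \<le> b" using d3b by simp
      thus "(d3 i)\<^sup>2 \<le> b\<^sup>2" by (metis abs_ge_zero power2_abs power_mono)
    qed simp
    also have "\<dots> = b\<^sup>2 * (y \<bullet> y)" using y
      by (simp add: scalar_prod_def atLeast0LessThan power2_eq_square sum_distrib_left)
    also have "y \<bullet> y = x \<bullet> x" unfolding y_def by (rule UTiso[OF x])
    finally have "(A *\<^sub>v x) \<bullet> (A *\<^sub>v x) \<le> b\<^sup>2 * (x \<bullet> x)" .
    hence "sqrt ((A *\<^sub>v x) \<bullet> (A *\<^sub>v x)) \<le> sqrt (b\<^sup>2 * (x \<bullet> x))" by (rule real_sqrt_le_mono)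
    thus ?thesis unfolding vnorm_def using b by (simp add: real_sqrt_mult)
  qed
  have dcA: "dim_col A = n" using A by simp
  show ub: "spec_norm A \<le> b" if b: "b \<ge> 0" and bi: "\<And>i. i<n \<Longrightarrow> \<bar>(\<rho> - e i)/(2*(\<rho> + e i))\<bar> \<le> b" for b
    by (rule spec_norm_le[OF b]) (use bound[OF b bi] dcA in auto)
  fix l x assume x: "x \<in> carrier_vec n" and x0: "x \<noteq> 0\<^sub>v n" and evx: "Hm *\<^sub>v x = l \<cdot>\<^sub>v x" and l: "l > 0"
  define bb where "bb = (\<Sum>i<n. \<bar>(\<rho> - e i)/(2*(\<rho> + e i))\<bar>)"
  have bb: "bb \<ge> 0" unfolding bb_def by (intro sum_nonneg) auto
  have bbi: "\<bar>(\<rho> - e i)/(2*(\<rho> + e i))\<bar> \<le> bb" if "i < n" for i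
    unfolding bb_def by (rule member_le_sum) (use that in auto)
  have Kx: "K *\<^sub>v x = (1 + l / \<rho>) \<cdot>\<^sub>v x"
  proof -
    have "K *\<^sub>v x = (1/\<rho>) \<cdot>\<^sub>v (Hm *\<^sub>v x) + x" unfolding K_def
      using Hm x by (simp add: add_mult_distrib_mat_vec[of _ n n] smult_mat_vec[OF Hm])
    thus ?thesis unfolding evx using x by (intro eq_vecI) (auto simp: distrib_right)
  qed
  have "x = B0 *\<^sub>v (K *\<^sub>v x)" using B0 K x B0K by (simp add: assoc_mult_mat_vec[symmetric, of B0 n n K n x])
  also have "\<dots> = (1 + l / \<rho>) \<cdot>\<^sub>v (B0 *\<^sub>v x)" unfolding Kx by (rule mult_mat_vec[OF B0 x])
  finally have "(\<rho> / (\<rho> + l)) \<cdot>\<^sub>v x = (\<rho> / (\<rho> + l)) \<cdot>\<^sub>v ((1 + l / \<rho>) \<cdot>\<^sub>v (B0 *\<^sub>v x))" by simp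
  also have "\<dots> = ((\<rho> / (\<rho> + l)) * (1 + l / \<rho>)) \<cdot>\<^sub>v (B0 *\<^sub>v x)" by (simp add: smult_smult_assoc)
  also have "(\<rho> / (\<rho> + l)) * (1 + l / \<rho>) = 1"
  proof -
    have p: "\<rho> + l > 0" using rho l by simp
    have "1 + l / \<rho> = (\<rho> + l) / \<rho>" using rho by (simp add: field_simps)
    thus ?thesis using p rho by simp
  qed
  also have "1 \<cdot>\<^sub>v (B0 *\<^sub>v x) = B0 *\<^sub>v x" by simp
  finally have B0x: "B0 *\<^sub>v x = (\<rho> / (\<rho> + l)) \<cdot>\<^sub>v x" ..
  have "A *\<^sub>v x = B0 *\<^sub>v x - (1/2) \<cdot>\<^sub>v x" unfolding Aeq
    using B0 x by (simp add: minus_mult_distrib_mat_vec[of _ n n] smult_mat_vec[of "1\<^sub>m n" n n])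
  also have "\<dots> = ((\<rho> - l)/(2*(\<rho> + l))) \<cdot>\<^sub>v x" unfolding B0x using rho l x
    by (intro eq_vecI) (auto simp: field_simps)
  finally have Axl: "A *\<^sub>v x = ((\<rho> - l)/(2*(\<rho> + l))) \<cdot>\<^sub>v x" .
  show "\<bar>(\<rho> - l)/(2*(\<rho> + l))\<bar> \<le> spec_norm A"
    by (rule spec_norm_ge[OF bb _ _ _ Axl]) (use bound[OF bb bbi] dcA x x0 in auto)
qed



lemma R_dec: assumes "0 < (a::real)" "a \<le> l" "l \<le> r"
  shows "(r - l) / (r + l) \<le> (r - a) / (r + a)"
proof -
  have "(r - l) * (r + a) \<le> (r - a) * (r + l)" using assms by (simp add: algebra_simps mult_right_mono)
  thus ?thesis using assms by (simp add: divide_simps)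
qed

lemma R_inc: assumes "0 < (r::real)" "r \<le> l" "l \<le> b"
  shows "(l - r) / (l + r) \<le> (b - r) / (b + r)"
proof -
  have "(l - r) * (b + r) \<le> (b - r) * (l + r)" using assms by (simp add: algebra_simps mult_left_mono)
  thus ?thesis using assms by (simp add: divide_simps)
qed

lemma R_eq: assumes "0 < (a::real)" "0 < r" "r * r = a * b"
  shows "(b - r) / (b + r) = (r - a) / (r + a)"
proof -
  have "a * b > 0" using assms by (metis mult_pos_pos)
  hence "b > 0" using assms by (simp add: zero_less_mult_iff)
  hence "(b - r) * (r + a) = (r - a) * (b + r)" using assms by (simp add: algebra_simps)
  thus ?thesis using assms \<open>b > 0\<close> by (simp add: divide_simps)
qed

lemma sqrt_between: assumes "0 < (a::real)" "a \<le> b"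
  shows "a \<le> sqrt (a * b)" "sqrt (a * b) \<le> b" "sqrt (a * b) * sqrt (a * b) = a * b" "sqrt (a*b) > 0"
proof -
  have "a * a \<le> a * b" "a * b \<le> b * b" using assms by (simp_all add: mult_left_mono mult_right_mono)
  thus "a \<le> sqrt (a * b)" "sqrt (a * b) \<le> b"
    using assms real_sqrt_le_mono[of "a*a" "a*b"] real_sqrt_le_mono[of "a*b" "b*b"] by auto
  show "sqrt (a * b) * sqrt (a * b) = a * b" using assms by simp
  show "sqrt (a*b) > 0" using assms by simp
qed

lemma halfabs: "\<bar>x\<bar> \<le> \<bar>y\<bar> \<Longrightarrow> \<bar>x / 2\<bar> \<le> \<bar>(y::real) / 2\<bar>"
  by simp

lemma R1: assumes a: "0 < (a::real)" "a \<le> l" "l \<le> b"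
  defines "r \<equiv> sqrt (a * b)"
  shows "\<bar>(r - l) / (2 * (r + l))\<bar> \<le> \<bar>(r - a) / (2 * (r + a))\<bar>"
proof -
  have ab: "a \<le> b" using a by simp
  note s = sqrt_between[OF a(1) ab, folded r_def]
  have rl: "r + l > 0" "r + a > 0" using s a by auto
  have "\<bar>(r - l) / (r + l)\<bar> \<le> (r - a) / (r + a)"
  proof (cases "l \<le> r")
    case True
    thus ?thesis using R_dec[OF a(1) a(2) True] rl by simp
  next
    case False
    have "\<bar>(r - l) / (r + l)\<bar> = (l - r) / (l + r)" using False rl by (simp add: abs_if algebra_simps divide_simps)
    also have "\<dots> \<le> (b - r) / (b + r)" by (rule R_inc) (use s False a in auto)
    also have "\<dots> = (r - a) / (r + a)" by (rule R_eq) (use s a in auto)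
    finally show ?thesis .
  qed
  moreover have "(r - a) / (r + a) \<ge> 0" using s rl by simp
  ultimately have key: "\<bar>(r - l) / (r + l)\<bar> \<le> \<bar>(r - a) / (r + a)\<bar>" by (metis abs_of_nonneg)
  have e1: "(r - l) / (2 * (r + l)) = ((r - l) / (r + l)) / 2"
    and e2: "(r - a) / (2 * (r + a)) = ((r - a) / (r + a)) / 2" by (simp_all add: divide_divide_eq_left mult.commute)
  show ?thesis unfolding e1 e2 by (rule halfabs[OF key])
qed

lemma R2: assumes a: "0 < (a::real)" "a \<le> b" and rho: "\<rho> > 0"
  defines "r \<equiv> sqrt (a * b)"
  shows "\<bar>(r - a) / (2 * (r + a))\<bar> \<le> \<bar>(\<rho> - a) / (2 * (\<rho> + a))\<bar> \<or>
         \<bar>(r - a) / (2 * (r + a))\<bar> \<le> \<bar>(\<rho> - b) / (2 * (\<rho> + b))\<bar>"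
proof -
  note s = sqrt_between[OF a(1) a(2), folded r_def]
  have e1: "(r - a) / (2 * (r + a)) = ((r - a) / (r + a)) / 2"
    and e2: "(\<rho> - a) / (2 * (\<rho> + a)) = ((\<rho> - a) / (\<rho> + a)) / 2"
    and e3: "(\<rho> - b) / (2 * (\<rho> + b)) = ((\<rho> - b) / (\<rho> + b)) / 2"
    by (simp_all add: divide_divide_eq_left mult.commute)
  have nn: "(r - a) / (r + a) \<ge> 0" using s a by simp
  show ?thesis
  proof (cases "r \<le> \<rho>")
    case True
    have "(r - a) / (r + a) \<le> (\<rho> - a) / (\<rho> + a)" by (rule R_inc) (use a s True in auto)
    hence "\<bar>(r - a) / (r + a)\<bar> \<le> \<bar>(\<rho> - a) / (\<rho> + a)\<bar>" using nn by linarith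
    thus ?thesis unfolding e1 e2 e3 using halfabs by blast
  next
    case False
    have "(r - a) / (r + a) = (b - r) / (b + r)" by (rule R_eq[symmetric]) (use s a in auto)
    also have "\<dots> \<le> (b - \<rho>) / (b + \<rho>)" by (rule R_dec) (use a s False rho in auto)
    also have "\<dots> = \<bar>(\<rho> - b) / (\<rho> + b)\<bar>"
    proof -
      have "\<rho> \<le> b" using False s by linarith
      thus ?thesis using rho by (simp add: abs_div_pos abs_of_nonneg algebra_simps)
    qed
    finally have "\<bar>(r - a) / (r + a)\<bar> \<le> \<bar>(\<rho> - b) / (\<rho> + b)\<bar>" using nn by linarith
    thus ?thesis unfolding e1 e2 e3 using halfabs by blast
  qed
qed



lemma per_block:
  fixes Q Z :: "real mat"
  assumes Q: "Q \<in> carrier_mat N N" and Z: "Z \<in> carrier_mat N m" and ZZ: "Z\<^sup>T * Z = 1\<^sub>m m"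
    and m: "m > 0" and pd: "sym_pd (Z\<^sup>T * Q * Z)"
  shows "sqrt (eig_min (Z\<^sup>T * Q * Z) * eig_max (Z\<^sup>T * Q * Z)) > 0"
    and "\<rho> > 0 \<Longrightarrow> Theta Q Z (sqrt (eig_min (Z\<^sup>T * Q * Z) * eig_max (Z\<^sup>T * Q * Z))) \<le> Theta Q Z \<rho>"
proof -
  define H where "H = Z\<^sup>T * Q * Z"
  have ZT: "Z\<^sup>T \<in> carrier_mat m N" using Z by simp
  have H: "H \<in> carrier_mat m m" unfolding H_def
    by (rule mult_carrier_mat[OF mult_carrier_mat[OF ZT Q] Z])
  have Hsym: "H\<^sup>T = H" using pd unfolding H_def sym_pd_def by simp
  have Hpos: "\<And>v. v \<in> carrier_vec m \<Longrightarrow> v \<noteq> 0\<^sub>v m \<Longrightarrow> v \<bullet> (H *\<^sub>v v) > 0"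
    using pd H unfolding H_def[symmetric] sym_pd_def by auto
  have evpos: "l > 0" if x: "x \<in> carrier_vec m" "x \<noteq> 0\<^sub>v m" and hx: "H *\<^sub>v x = l \<cdot>\<^sub>v x" for x l
  proof -
    have "x \<bullet> x \<noteq> 0" using rvec_sq_zero[OF x(1)] x(2) by auto
    hence p: "x \<bullet> x > 0" using rvec_sq_nonneg[of x] by linarith
    have "x \<bullet> (H *\<^sub>v x) = l * (x \<bullet> x)" unfolding hx using x by simp
    hence "l * (x \<bullet> x) > 0" using Hpos[OF x] by simp
    thus ?thesis using p by (simp add: zero_less_mult_iff)
  qed
  obtain vs where vs: "length vs = m"
    "\<And>i. i < m \<Longrightarrow> vs!i \<in> carrier_vec m \<and> (\<exists>e. H *\<^sub>v vs!i = e \<cdot>\<^sub>v vs!i)"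
    "\<And>i j. i < m \<Longrightarrow> j < m \<Longrightarrow> vs!i \<bullet> vs!j = (if i = j then 1 else 0)"
    using spectral[OF H Hsym] by blast
  define e where "e = (\<lambda>i. SOME c. H *\<^sub>v vs!i = c \<cdot>\<^sub>v vs!i)"
  have ev: "H *\<^sub>v vs!i = e i \<cdot>\<^sub>v vs!i" if "i < m" for i
    unfolding e_def by (rule someI_ex) (use vs(2)[OF that] in blast)
  have vc: "vs!i \<in> carrier_vec m" if "i < m" for i using vs(2)[OF that] by blast
  have vnz: "vs!i \<noteq> 0\<^sub>v m" if "i < m" for i
  proof
    assume "vs!i = 0\<^sub>v m"
    hence "vs!i \<bullet> vs!i = 0" by simp
    thus False using vs(3)[OF that that] by simp
  qed
  have epos: "e i > 0" if "i < m" for i by (rule evpos[OF vc[OF that] vnz[OF that] ev[OF that]])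
  define S where "S = {k. eigenvalue H k}"
  have eS: "e i \<in> S" if "i < m" for i
    unfolding S_def eigenvalue_def eigenvector_def using vc[OF that] vnz[OF that] ev[OF that] H by auto
  have finS: "finite S"
  proof -
    have "char_poly H \<noteq> 0" using degree_monic_char_poly[OF H] by auto
    hence "finite {k. poly (char_poly H) k = 0}" by (rule poly_roots_finite)
    moreover have "S \<subseteq> {k. poly (char_poly H) k = 0}"
      unfolding S_def using eigenvalue_root_char_poly[OF H] by auto
    ultimately show ?thesis by (rule finite_subset[rotated])
  qed
  have neS: "S \<noteq> {}" using eS[OF m] by auto
  define lm where "lm = eig_min H"
  define lM where "lM = eig_max H"
  have lmS: "lm \<in> S" and lMS: "lM \<in> S" unfolding lm_def lM_def eig_min_def eig_max_def S_def[symmetric]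
    using Min_in[OF finS neS] Max_in[OF finS neS] by auto
  have ebound: "lm \<le> e i" "e i \<le> lM" if "i < m" for i
    unfolding lm_def lM_def eig_min_def eig_max_def S_def[symmetric]
    using Min_le[OF finS eS[OF that]] Max_ge[OF finS eS[OF that]] by auto
  obtain xm where xm: "xm \<in> carrier_vec m" "xm \<noteq> 0\<^sub>v m" "H *\<^sub>v xm = lm \<cdot>\<^sub>v xm"
    using lmS H unfolding S_def eigenvalue_def eigenvector_def by auto
  obtain xM where xM: "xM \<in> carrier_vec m" "xM \<noteq> 0\<^sub>v m" "H *\<^sub>v xM = lM \<cdot>\<^sub>v xM"
    using lMS H unfolding S_def eigenvalue_def eigenvector_def by auto
  have lmpos: "lm > 0" by (rule evpos[OF xm])
  have lMpos: "lM > 0" by (rule evpos[OF xM])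
  have lmM: "lm \<le> lM" using ebound[OF m] by linarith
  define r where "r = sqrt (lm * lM)"
  note s = sqrt_between[OF lmpos lmM, folded r_def]
  show "sqrt (eig_min (Z\<^sup>T * Q * Z) * eig_max (Z\<^sup>T * Q * Z)) > 0"
    using s unfolding r_def lm_def lM_def H_def by simp
  have Th: "Theta Q Z t = spec_norm (inv_mat ((1/t) \<cdot>\<^sub>m H + 1\<^sub>m m) - (1/2) \<cdot>\<^sub>m 1\<^sub>m m)" for t
  proof -
    have QI: "(1/t) \<cdot>\<^sub>m Q \<in> carrier_mat N N" "1\<^sub>m N \<in> carrier_mat N N" using Q by simp_all
    have ZTQ: "Z\<^sup>T * Q \<in> carrier_mat m N" using ZT Q by simp
    have "Z\<^sup>T * ((1/t) \<cdot>\<^sub>m Q + 1\<^sub>m N) = Z\<^sup>T * ((1/t) \<cdot>\<^sub>m Q) + Z\<^sup>T * 1\<^sub>m N"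
      by (rule mult_add_distrib_mat[OF ZT QI])
    also have "\<dots> = (1/t) \<cdot>\<^sub>m (Z\<^sup>T * Q) + Z\<^sup>T" using mult_smult_distrib[OF ZT Q] ZT by simp
    finally have "Z\<^sup>T * ((1/t) \<cdot>\<^sub>m Q + 1\<^sub>m N) * Z = ((1/t) \<cdot>\<^sub>m (Z\<^sup>T * Q) + Z\<^sup>T) * Z" by simp
    also have "\<dots> = ((1/t) \<cdot>\<^sub>m (Z\<^sup>T * Q)) * Z + Z\<^sup>T * Z"
      by (rule add_mult_distrib_mat[of _ m N]) (use ZTQ ZT Z in simp_all)
    also have "\<dots> = (1/t) \<cdot>\<^sub>m H + 1\<^sub>m m" unfolding ZZ H_def using mult_smult_assoc_mat[OF ZTQ Z] by simp
    finally have "Z\<^sup>T * ((1/t) \<cdot>\<^sub>m Q + 1\<^sub>m (dim_row Q)) * Z = (1/t) \<cdot>\<^sub>m H + 1\<^sub>m m" using Q by simp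
    moreover have "dim_col Z = m" using Z by simp
    ultimately show ?thesis unfolding Theta_def by simp
  qed
  assume rho: "\<rho> > 0"
  have up: "Theta Q Z r \<le> \<bar>(r - lm) / (2 * (r + lm))\<bar>"
    unfolding Th
  proof (rule theta_bounds(1)[OF H vs(1) vc ev _ epos])
    show "r > 0" using s by simp
    fix i assume i: "i < m"
    show "\<bar>(r - e i) / (2 * (r + e i))\<bar> \<le> \<bar>(r - lm) / (2 * (r + lm))\<bar>"
      unfolding r_def by (rule R1) (use lmpos ebound[OF i] in auto)
  qed (use vs(3) in auto)
  have lo1: "\<bar>(\<rho> - lm) / (2 * (\<rho> + lm))\<bar> \<le> Theta Q Z \<rho>"
    unfolding Th by (rule theta_bounds(2)[OF H vs(1) vc ev _ epos rho xm lmpos]) (use vs(3) in auto)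
  have lo2: "\<bar>(\<rho> - lM) / (2 * (\<rho> + lM))\<bar> \<le> Theta Q Z \<rho>"
    unfolding Th by (rule theta_bounds(2)[OF H vs(1) vc ev _ epos rho xM lMpos]) (use vs(3) in auto)
  have "\<bar>(r - lm) / (2 * (r + lm))\<bar> \<le> Theta Q Z \<rho>"
    using R2[OF lmpos lmM rho, folded r_def] lo1 lo2 by linarith
  thus "Theta Q Z (sqrt (eig_min (Z\<^sup>T * Q * Z) * eig_max (Z\<^sup>T * Q * Z))) \<le> Theta Q Z \<rho>"
    using up unfolding r_def lm_def lM_def H_def by linarith
qed


theorem proposition2:
  fixes M :: nat and Q C Z :: "nat \<Rightarrow> real mat" and \<beta> :: real
  assumes M_pos: "M \<ge> 1"
    and Q_dim: "\<And>i. i < M \<Longrightarrow> Q i \<in> carrier_mat (dim_col (C i)) (dim_col (C i))"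
    and Q_psd: "\<And>i. i < M \<Longrightarrow> sym_psd (Q i)"
    and C_rank: "\<And>i. i < M \<Longrightarrow> full_row_rank (C i)"
    and Z_basis: "\<And>i. i < M \<Longrightarrow> orthonormal_null_basis (Z i) (C i)"
    and Z_nontriv: "\<And>i. i < M \<Longrightarrow> dim_col (Z i) > 0"
    and ZQZ_pd: "\<And>i. i < M \<Longrightarrow> sym_pd ((Z i)\<^sup>T * Q i * Z i)"
    and \<beta>: "0 < \<beta>" "\<beta> < 1"
  defines "\<rho>star \<equiv> \<lambda>i. sqrt (eig_min ((Z i)\<^sup>T * Q i * Z i) * eig_max ((Z i)\<^sup>T * Q i * Z i))"
  shows "(\<forall>i<M. \<rho>star i > 0) \<and>
         (\<forall>\<rho>. (\<forall>i<M. \<rho> i > 0) \<longrightarrow>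
            Max {Theta (Q i) (Z i) (\<rho>star i) | i. i < M} \<le> Max {Theta (Q i) (Z i) (\<rho> i) | i. i < M})"
  proof -
  have blk: "\<rho>star i > 0 \<and> (\<forall>r. r > 0 \<longrightarrow> Theta (Q i) (Z i) (\<rho>star i) \<le> Theta (Q i) (Z i) r)"
    if i: "i < M" for i
  proof -
    define N where "N = dim_col (C i)"
    have Zb: "dim_row (Z i) = N" "(Z i)\<^sup>T * Z i = 1\<^sub>m (dim_col (Z i))"
      using Z_basis[OF i] unfolding orthonormal_null_basis_def N_def by auto
    have Zc: "Z i \<in> carrier_mat N (dim_col (Z i))" using Zb by (intro carrier_matI) auto
    have Qc: "Q i \<in> carrier_mat N N" using Q_dim[OF i] unfolding N_def .
    note pb = per_block[OF Qc Zc Zb(2) Z_nontriv[OF i] ZQZ_pd[OF i]]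
    show ?thesis using pb unfolding \<rho>star_def by auto
  qed
  show ?thesis
  proof (rule conjI)
    show "\<forall>i<M. \<rho>star i > 0" using blk by blast
  next
    show "\<forall>\<rho>. (\<forall>i<M. \<rho> i > 0) \<longrightarrow>
            Max {Theta (Q i) (Z i) (\<rho>star i) | i. i < M} \<le> Max {Theta (Q i) (Z i) (\<rho> i) | i. i < M}"
    proof (intro allI impI)
    fix \<rho> :: "nat \<Rightarrow> real" assume pos: "\<forall>i<M. \<rho> i > 0"
    have eq1: "{Theta (Q i) (Z i) (\<rho>star i) | i. i < M} = (\<lambda>i. Theta (Q i) (Z i) (\<rho>star i)) ` {..<M}" by auto
    have eq2: "{Theta (Q i) (Z i) (\<rho> i) | i. i < M} = (\<lambda>i. Theta (Q i) (Z i) (\<rho> i)) ` {..<M}" by auto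
    have ne: "{..<M} \<noteq> {}" using M_pos lessThan_empty_iff by (metis not_one_le_zero)
    show "Max {Theta (Q i) (Z i) (\<rho>star i) | i. i < M} \<le> Max {Theta (Q i) (Z i) (\<rho> i) | i. i < M}"
      unfolding eq1 eq2
    proof (rule Max.boundedI)
      show "finite ((\<lambda>i. Theta (Q i) (Z i) (\<rho>star i)) ` {..<M})" by simp
      show "(\<lambda>i. Theta (Q i) (Z i) (\<rho>star i)) ` {..<M} \<noteq> {}" using ne by simp
      fix t assume "t \<in> (\<lambda>i. Theta (Q i) (Z i) (\<rho>star i)) ` {..<M}"
      then obtain i where i: "i < M" and t: "t = Theta (Q i) (Z i) (\<rho>star i)" by auto
      have "t \<le> Theta (Q i) (Z i) (\<rho> i)" using blk[OF i] pos i t by auto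
      also have "\<dots> \<le> Max ((\<lambda>i. Theta (Q i) (Z i) (\<rho> i)) ` {..<M})"
        by (rule Max_ge) (use i in auto)
      finally show "t \<le> Max ((\<lambda>i. Theta (Q i) (Z i) (\<rho> i)) ` {..<M})" .
    qed
    qed
  qed
qed

end
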